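(* Let $G=(V,E)$ be an $n$-vertex finite simple undirected graph with distinct vertex IDs, whose neighborhood independence is bounded by a constant $c$, and let $K$ be a positive integer with $\delta(G)\ge K$. Then the procedure Efficient-VM run on $G$ with parameter $K$ terminates within $O(\log^* n + K^4)$ rounds.
   Context: $\Gamma(v)$ is the neighbor set of $v$, $\deg(v)=|\Gamma(v)|$, $\delta(G)=\min_v\deg(v)$. The neighborhood independence of $G$ is the maximum over $v$ of the size of an independent set contained in $\Gamma(v)$. Model: synchronous CONGEST model (in each round every vertex sends an $O(\log n)$-bit message to each neighbor and computes locally). Operation $K$-Next-Modulo$(v,\Gamma(v),K)$: list $\Gamma(v)\cup\{v\}$ in ascending ID order as $u_1,\dots,u_d$ ($d=\deg(v)+1$) with $v=u_i$; $v$ selects $u_{i+1},\dots,u_{i+K}$, indices cyclic modulo $d$. Procedure Efficient-VM$(G,K)$: (1) every vertex selects its $K$ neighbors by $K$-Next-Modulo (one round); let $G'=(V,E')$ with $E'$ the set of edges $\{v,u\}$ such that $v$ selected $u$, and $\Delta'$ its maximum degree; (2) compute a 2-hop coloring of $G'$ (vertices at distance at most $2$ in $G'$ get distinct colors) by running Linial's algorithm on $G'^2$, which uses $O(\Delta'^4)$ colors and $\log^* n+O(1)$ rounds; (3) process the color classes one per round in round-robin order, each active vertex distributing its backup data to the $K$ vertices it selected. *)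

theory Defs
  imports Main "HOL.Real"
begin

section \<open>Graphs: vertices are their (distinct, natural-number) IDs\<close>

definition simple_graph :: "nat set \<Rightarrow> (nat \<Rightarrow> nat \<Rightarrow> bool) \<Rightarrow> bool" where
  "simple_graph V E \<longleftrightarrow> finite V \<and> (\<forall>u v. E u v \<longrightarrow> u \<in> V \<and> v \<in> V)
     \<and> (\<forall>u v. E u v \<longrightarrow> E v u) \<and> (\<forall>v. \<not> E v v)"

definition nbrs :: "nat set \<Rightarrow> (nat \<Rightarrow> nat \<Rightarrow> bool) \<Rightarrow> nat \<Rightarrow> nat set" where
  "nbrs V E v = {u \<in> V. E v u}"

definition degree :: "nat set \<Rightarrow> (nat \<Rightarrow> nat \<Rightarrow> bool) \<Rightarrow> nat \<Rightarrow> nat" where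
  "degree V E v = card (nbrs V E v)"

definition independent :: "(nat \<Rightarrow> nat \<Rightarrow> bool) \<Rightarrow> nat set \<Rightarrow> bool" where
  "independent E S \<longleftrightarrow> (\<forall>u\<in>S. \<forall>w\<in>S. \<not> E u w)"

definition nbhd_independence :: "nat set \<Rightarrow> (nat \<Rightarrow> nat \<Rightarrow> bool) \<Rightarrow> nat" where
  "nbhd_independence V E =
     Max ({0} \<union> {card S | S v. v \<in> V \<and> S \<subseteq> nbrs V E v \<and> independent E S})"

text \<open>List nbrs(v) \<union> {v} in ascending ID order as u_1..u_d, v = u_i; select u_{i+1},...,u_{i+K}
  cyclically (0-based indices here).\<close>
definition next_modulo :: "nat set \<Rightarrow> (nat \<Rightarrow> nat \<Rightarrow> bool) \<Rightarrow> nat \<Rightarrow> nat \<Rightarrow> nat set" where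
  "next_modulo V E K v =
     (let L = sorted_list_of_set (insert v (nbrs V E v));
          d = length L;
          i = (THE i. i < d \<and> L ! i = v)
      in {L ! ((i + j) mod d) | j. 1 \<le> j \<and> j \<le> K})"

definition sel_edge :: "nat set \<Rightarrow> (nat \<Rightarrow> nat \<Rightarrow> bool) \<Rightarrow> nat \<Rightarrow> nat \<Rightarrow> nat \<Rightarrow> bool" where
  "sel_edge V E K u w \<longleftrightarrow> u \<in> V \<and> w \<in> V \<and>
     (w \<in> next_modulo V E K u \<or> u \<in> next_modulo V E K w)"

definition max_degree :: "nat set \<Rightarrow> (nat \<Rightarrow> nat \<Rightarrow> bool) \<Rightarrow> nat" where
  "max_degree V E = Max ({0} \<union> degree V E ` V)"

definition two_hop_coloring ::
    "nat set \<Rightarrow> (nat \<Rightarrow> nat \<Rightarrow> bool) \<Rightarrow> (nat \<Rightarrow> nat) \<Rightarrow> nat \<Rightarrow> bool" where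
  "two_hop_coloring V H col m \<longleftrightarrow> (\<forall>v\<in>V. col v < m) \<and>
     (\<forall>u\<in>V. \<forall>w\<in>V. u \<noteq> w \<and> (H u w \<or> (\<exists>x\<in>V. H u x \<and> H x w)) \<longrightarrow> col u \<noteq> col w)"

fun floor_log2 :: "nat \<Rightarrow> nat" where
  "floor_log2 n = (if n < 2 then 0 else Suc (floor_log2 (n div 2)))"

lemma floor_log2_less: "n \<ge> 2 \<Longrightarrow> floor_log2 n < n"
proof (induction n rule: less_induct)
  case (less n)
  show ?case
  proof (cases "n div 2 < 2")
    case True then show ?thesis using less.prems by simp
  next
    case False
    then have "floor_log2 (n div 2) < n div 2" using less by simp
    then show ?thesis using less.prems by simp
  qed
qed

function log_star :: "nat \<Rightarrow> nat" where
  "log_star n = (if n \<le> 1 then 0 else Suc (log_star (floor_log2 n)))"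
  by auto
termination
  by (relation "measure id") (auto simp: floor_log2_less simp del: floor_log2.simps)

text \<open>Step (1): one round. Step (2): Linial's algorithm on G'^2, taking log* n + b rounds
  (b the constant of Linial's algorithm) and producing a 2-hop coloring with m colors.
  Step (3): one round per color class, round-robin: m rounds.\<close>
definition efficient_vm_rounds :: "nat \<Rightarrow> nat \<Rightarrow> nat \<Rightarrow> nat" where
  "efficient_vm_rounds n b m = 1 + (log_star n + b) + m"

end

theory Submission
  imports Defs
begin

definition btw :: "nat \<Rightarrow> nat \<Rightarrow> nat \<Rightarrow> bool" where
  "btw w x u \<longleftrightarrow> (if w < u then w < x \<and> x < u else w < x \<or> x < u)"

lemma ss_less_iff:
  assumes "sorted_wrt (<) (L::nat list)" "a < length L" "b < length L"
  shows "L ! a < L ! b \<longleftrightarrow> a < b"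
proof
  assume h: "L ! a < L ! b"
  show "a < b"
  proof (rule ccontr)
    assume "\<not> a < b"
    then have "b < a \<or> a = b" by auto
    then show False
      using h sorted_wrt_nth_less[OF assms(1) _ assms(2)] by force
  qed
qed (use sorted_wrt_nth_less[OF assms(1) _ assms(3)] in auto)

lemma sel_between:
  assumes fin: "finite A" and wA: "w \<in> A"
    and Ld: "L = sorted_list_of_set A" "d = length L" "i = (THE i. i < d \<and> L ! i = w)"
    and uin: "u \<in> {L ! ((i + j) mod d) | j. 1 \<le> j \<and> j \<le> K}" and uw: "u \<noteq> w"
  shows "card {x\<in>A. btw w x u} < K"
proof -
  have sL: "set L = A" using fin Ld by simp
  have ss: "sorted_wrt (<) L" using Ld strict_sorted_list_of_set by simp
  have dist: "distinct L" using Ld by simp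
  have dA: "d = card A" using Ld fin by simp
  obtain i0 where i0: "i0 < d" "L ! i0 = w" using wA sL Ld by (metis in_set_conv_nth)
  have ii: "i = i0"
    unfolding Ld(3)
    apply (rule the_equality)
    using i0 apply simp
    using i0 dist Ld(2) nth_eq_iff_index_eq by blast
  have id: "i < d" "L ! i = w" using i0 ii by auto
  obtain j where j: "1 \<le> j" "j \<le> K" "u = L ! ((i + j) mod d)" using uin by auto
  have dpos: "0 < d" using id by simp
  have uA: "u \<in> A" using j(3) sL dpos Ld(2) by (metis mod_less_divisor nth_mem)
  show ?thesis
  proof (cases "d \<le> j")
    case True
    have "{x\<in>A. btw w x u} \<subseteq> A - {w, u}" by (auto simp: btw_def)
    then have "card {x\<in>A. btw w x u} \<le> card (A - {w,u})" using fin by (intro card_mono) auto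
    also have "\<dots> = d - 2" using dA wA uA uw fin by (simp add: card_Diff_subset)
    finally show ?thesis using True j by linarith
  next
    case False
    have cov: "A = (\<lambda>q. L ! q) ` {..<d}" unfolding sL[symmetric] Ld(2) by (auto simp: set_conv_nth)
    show ?thesis
    proof (cases "i + j < d")
      case True
      let ?Q = "{i<..<i+j}"
      have "{x\<in>A. btw w x u} \<subseteq> (\<lambda>q. L ! q) ` ?Q"
      proof
        fix x assume x: "x \<in> {x\<in>A. btw w x u}"
        then obtain q where q: "q < d" "x = L ! q" using cov by auto
        have wu: "w < u" using j(1) j(3) id True ss_less_iff[OF ss] Ld(2) by auto
        then have "w < x" "x < u" using x by (auto simp: btw_def)
        have uu: "u = L ! (i + j)" using j(3) True by simp
        have "i < q" using ss_less_iff[OF ss, of i q] \<open>w < x\<close> q id Ld(2) by simp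
        moreover have "q < i + j" using ss_less_iff[OF ss, of q "i+j"] \<open>x < u\<close> q uu True Ld(2) by simp
        ultimately have "i < q" "q < i + j" by auto
        then show "x \<in> (\<lambda>q. L ! q) ` ?Q" using q by auto
      qed
      then have "card {x\<in>A. btw w x u} \<le> card ((\<lambda>q. L ! q) ` ?Q)"
        by (intro card_mono) auto
      also have "\<dots> \<le> card ?Q" by (rule card_image_le) auto
      finally show ?thesis using j by simp
    next
      case F2: False
      let ?Q = "{i<..<d} \<union> {..<i+j-d}"
      have p: "(i + j) mod d = i + j - d" 
      proof -
        have "(i + j) mod d = (i + j - d) mod d" using F2 by (simp add: le_mod_geq)
        also have "\<dots> = i + j - d" using False id by (intro mod_less) linarith
        finally show ?thesis .
      qed
      have "{x\<in>A. btw w x u} \<subseteq> (\<lambda>q. L ! q) ` ?Q"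
      proof
        fix x assume x: "x \<in> {x\<in>A. btw w x u}"
        then obtain q where q: "q < d" "x = L ! q" using cov by auto
        have wu: "\<not> w < u"
        proof -
          have "i + j - d < i" using False F2 id by linarith
          then show ?thesis using ss_less_iff[OF ss, of i "i+j-d"] j(3) p id Ld(2) by simp
        qed
        then have "w < x \<or> x < u" using x by (auto simp: btw_def)
        have uu: "u = L ! (i + j - d)" using j(3) p by simp
        have pd: "i + j - d < d" using False id by linarith
        have "w < x \<Longrightarrow> i < q" using ss_less_iff[OF ss, of i q] q id Ld(2) by simp
        moreover have "x < u \<Longrightarrow> q < i + j - d" using ss_less_iff[OF ss, of q "i+j-d"] q uu pd Ld(2) by simp
        ultimately have "i < q \<or> q < i + j - d" using \<open>w < x \<or> x < u\<close> by blast
        then show "x \<in> (\<lambda>q. L ! q) ` ?Q" using q by auto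
      qed
      then have "card {x\<in>A. btw w x u} \<le> card ((\<lambda>q. L ! q) ` ?Q)"
        by (intro card_mono) auto
      also have "\<dots> \<le> card ?Q" by (rule card_image_le) auto
      also have "\<dots> \<le> card {i<..<d} + card {..<i+j-d}" by (rule card_Un_le)
      also have "\<dots> = j - 1" using F2 False id by simp
      finally show ?thesis using j by simp
    qed
  qed
qed

lemma greedy:
  assumes "finite S" "\<forall>x y. E x y \<longrightarrow> E y x" "\<forall>v. \<not> E v v"
    "\<forall>s\<in>S. card {x\<in>S. s < x \<and> E s x} < (K::nat)"
  shows "\<exists>I\<subseteq>S. independent E I \<and> card S \<le> K * card I"
  using assms
proof (induction "card S" arbitrary: S rule: less_induct)
  case less
  show ?case
  proof (cases "S = {}")
    case True then show ?thesis by (auto simp: independent_def)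
  next
    case False
    define s where "s = Min S"
    have sS: "s \<in> S" using False less.prems(1) s_def by simp
    have smin: "\<forall>x\<in>S. s \<le> x" using less.prems(1) s_def by simp
    define F where "F = {x\<in>S. s < x \<and> E s x}"
    define S' where "S' = S - insert s F"
    have fS': "finite S'" using less.prems(1) S'_def by simp
    have cF: "card F < K" using less.prems(4) sS F_def by simp
    have FS: "insert s F \<subseteq> S" using sS F_def by auto
    have cS: "card S = card S' + card (insert s F)"
      using S'_def less.prems(1) FS card_Diff_subset[of "insert s F" S]
      by (metis card_mono le_add_diff_inverse2 finite_subset)
    have cins: "card (insert s F) \<le> K"
      using cF less.prems(1) FS by (metis card_insert_le_m1 finite_subset less_imp_le_nat finite_insert le_trans card_insert_if Suc_leI)
    have "card (insert s F) > 0" using FS less.prems(1) by (metis card_gt_0_iff finite_subset insert_not_empty)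
    then have lt: "card S' < card S" using cS by simp
    have "\<forall>s'\<in>S'. card {x\<in>S'. s' < x \<and> E s' x} < K"
    proof
      fix s' assume "s' \<in> S'"
      then have "s' \<in> S" using S'_def by auto
      have "card {x\<in>S'. s' < x \<and> E s' x} \<le> card {x\<in>S. s' < x \<and> E s' x}"
        using less.prems(1) S'_def by (intro card_mono) auto
      then show "card {x\<in>S'. s' < x \<and> E s' x} < K" using less.prems(4) \<open>s' \<in> S\<close> by fastforce
    qed
    then obtain I' where I': "I' \<subseteq> S'" "independent E I'" "card S' \<le> K * card I'"
      using less.hyps[OF lt fS' less.prems(2,3)] by blast
    have sI': "s \<notin> I'" using I'(1) S'_def by auto
    have nadj: "\<forall>x\<in>I'. \<not> E s x"
    proof
      fix x assume "x \<in> I'"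
      then have "x \<in> S" "x \<notin> F" "x \<noteq> s" using I'(1) S'_def by auto
      then show "\<not> E s x" using smin F_def by fastforce
    qed
    have ind: "independent E (insert s I')"
      using I'(2) nadj less.prems(2,3) unfolding independent_def by blast
    have "card (insert s I') = Suc (card I')"
      using sI' I'(1) fS' by (simp add: finite_subset)
    then have "card S \<le> K * card (insert s I')" using cS cins I'(3) by simp
    then show ?thesis using ind I'(1) sS S'_def by (intro exI[of _ "insert s I'"]) auto
  qed
qed

lemma nm_sub:
  assumes "simple_graph V E"
  shows "next_modulo V E K w \<subseteq> insert w (nbrs V E w)"
proof
  fix u assume u: "u \<in> next_modulo V E K w"
  define A where "A = insert w (nbrs V E w)"
  have fA: "finite A" using assms unfolding A_def simple_graph_def nbrs_def by auto
  define L where "L = sorted_list_of_set A"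
  have sL: "set L = A" using fA L_def by simp
  have dpos: "0 < length L" using sL A_def by (metis empty_iff insertI1 length_pos_if_in_set)
  obtain j where "u = L ! (((THE i. i < length L \<and> L ! i = w) + j) mod length L)"
    using u unfolding next_modulo_def Let_def A_def[symmetric] L_def[symmetric] by auto
  then show "u \<in> A" using dpos sL by (metis mod_less_divisor nth_mem)
qed

lemma nm_card: "card (next_modulo V E K w) \<le> K"
proof -
  have "next_modulo V E K w = (\<lambda>j. (let L = sorted_list_of_set (insert w (nbrs V E w));
          d = length L; i = (THE i. i < d \<and> L ! i = w) in L ! ((i + j) mod d))) ` {1..K}"
    unfolding next_modulo_def Let_def by auto
  then show ?thesis using card_image_le[of "{1..K}"] by simp
qed

lemma nm_between:
  assumes "simple_graph V E" "u \<in> next_modulo V E K w" "u \<noteq> w"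
  shows "card {x\<in>insert w (nbrs V E w). btw w x u} < K"
proof -
  have fA: "finite (insert w (nbrs V E w))" using assms unfolding simple_graph_def nbrs_def by auto
  show ?thesis
    apply (rule sel_between[OF fA insertI1 refl refl refl _ assms(3)])
    using assms(2) unfolding next_modulo_def Let_def by simp
qed

lemma ni_bound:
  assumes "simple_graph V E" "v \<in> V" "S \<subseteq> nbrs V E v" "independent E S"
  shows "card S \<le> nbhd_independence V E"
proof -
  let ?M = "{0} \<union> {card S | S v. v \<in> V \<and> S \<subseteq> nbrs V E v \<and> independent E S}"
  have fV: "finite V" using assms(1) simple_graph_def by auto
  have "?M \<subseteq> {..card V}"
  proof
    fix k assume "k \<in> ?M"
    then show "k \<in> {..card V}"
    proof
      assume "k \<in> {card S | S v. v \<in> V \<and> S \<subseteq> nbrs V E v \<and> independent E S}"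
      then obtain S' v' where "k = card S'" "S' \<subseteq> nbrs V E v'" by auto
      then show ?thesis using fV by (auto simp: nbrs_def intro!: card_mono)
    qed simp
  qed
  then have "finite ?M" by (rule finite_subset) simp
  moreover have "card S \<in> ?M" using assms by blast
  ultimately show ?thesis unfolding nbhd_independence_def by (rule Max_ge)
qed

lemma side_bound:
  assumes sg: "simple_graph V E" and uV: "u \<in> V" and ni: "nbhd_independence V E \<le> c"
    and Sdef: "S \<subseteq> {w\<in>V. w \<noteq> u \<and> u \<in> next_modulo V E K w}"
    and fwd: "\<And>s x. s \<in> S \<Longrightarrow> x \<in> S \<Longrightarrow> s < x \<Longrightarrow> btw s x u"
  shows "card S \<le> K * c"
proof -
  have fV: "finite V" using sg simple_graph_def by auto
  have sym: "\<forall>x y. E x y \<longrightarrow> E y x" and irr: "\<forall>v. \<not> E v v" using sg simple_graph_def by auto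
  have SN: "S \<subseteq> nbrs V E u"
  proof
    fix w assume "w \<in> S"
    then have "w \<in> V" "w \<noteq> u" "u \<in> next_modulo V E K w" using Sdef by auto
    then have "u \<in> nbrs V E w" using nm_sub[OF sg] by auto
    then show "w \<in> nbrs V E u" using sym \<open>w \<in> V\<close> by (auto simp: nbrs_def)
  qed
  have fS: "finite S" using SN fV by (metis finite_subset mem_Collect_eq nbrs_def subsetI)
  have "\<forall>s\<in>S. card {x\<in>S. s < x \<and> E s x} < K"
  proof
    fix s assume sS: "s \<in> S"
    then have "s \<noteq> u" "u \<in> next_modulo V E K s" using Sdef by auto
    then have lt: "card {x\<in>insert s (nbrs V E s). btw s x u} < K" by (intro nm_between[OF sg]) auto
    have "{x\<in>S. s < x \<and> E s x} \<subseteq> {x\<in>insert s (nbrs V E s). btw s x u}"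
      using fwd sS Sdef by (auto simp: nbrs_def)
    moreover have "finite {x\<in>insert s (nbrs V E s). btw s x u}" using fV by (auto simp: nbrs_def)
    ultimately have "card {x\<in>S. s < x \<and> E s x} \<le> card {x\<in>insert s (nbrs V E s). btw s x u}"
      by (rule card_mono[rotated])
    then show "card {x\<in>S. s < x \<and> E s x} < K" using lt by simp
  qed
  then obtain I where I: "I \<subseteq> S" "independent E I" "card S \<le> K * card I"
    using greedy[OF fS sym irr] by blast
  have "card I \<le> c" using ni_bound[OF sg uV _ I(2)] I(1) SN ni by fastforce
  then show ?thesis using I(3) by (meson le_trans mult_le_mono2)
qed

lemma deg_bound:
  assumes sg: "simple_graph V E" and uV: "u \<in> V" and ni: "nbhd_independence V E \<le> c"
  shows "degree V (sel_edge V E K) u \<le> K + 1 + 2 * (K * c)"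
proof -
  have fV: "finite V" using sg simple_graph_def by auto
  define S1 where "S1 = {w\<in>V. w \<noteq> u \<and> u \<in> next_modulo V E K w \<and> w < u}"
  define S2 where "S2 = {w\<in>V. w \<noteq> u \<and> u \<in> next_modulo V E K w \<and> u < w}"
  have c1: "card S1 \<le> K * c"
    by (rule side_bound[OF sg uV ni]) (auto simp: S1_def btw_def)
  have c2: "card S2 \<le> K * c"
    by (rule side_bound[OF sg uV ni]) (auto simp: S2_def btw_def)
  have sub: "nbrs V (sel_edge V E K) u \<subseteq> ((next_modulo V E K u \<inter> V) \<union> {u}) \<union> (S1 \<union> S2)"
    by (auto simp: nbrs_def sel_edge_def S1_def S2_def)
  have "degree V (sel_edge V E K) u \<le> card (((next_modulo V E K u \<inter> V) \<union> {u}) \<union> (S1 \<union> S2))"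
    unfolding degree_def using fV sub by (intro card_mono) (auto simp: S1_def S2_def)
  also have "\<dots> \<le> card ((next_modulo V E K u \<inter> V) \<union> {u}) + card (S1 \<union> S2)" by (rule card_Un_le)
  also have "\<dots> \<le> (card (next_modulo V E K u \<inter> V) + card {u}) + (card S1 + card S2)"
    by (intro add_mono card_Un_le)
  also have "card (next_modulo V E K u \<inter> V) \<le> K"
  proof -
    have "finite (next_modulo V E K u)"
      by (rule finite_subset[OF nm_sub[OF sg]]) (use fV in \<open>simp add: nbrs_def\<close>)
    then have "card (next_modulo V E K u \<inter> V) \<le> card (next_modulo V E K u)" by (intro card_mono) auto
    then show ?thesis using nm_card[of V E K u] by linarith
  qed
  finally show ?thesis using c1 c2 by simp
qed

lemma maxdeg_bound:
  assumes sg: "simple_graph V E" and ni: "nbhd_independence V E \<le> c" and K: "K \<ge> 1"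
  shows "max_degree V (sel_edge V E K) \<le> (2 * c + 2) * K"
proof -
  have fV: "finite V" using sg simple_graph_def by auto
  have "\<forall>u\<in>V. degree V (sel_edge V E K) u \<le> (2 * c + 2) * K"
  proof
    fix u assume "u \<in> V"
    then have "degree V (sel_edge V E K) u \<le> K + 1 + 2 * (K * c)" by (rule deg_bound[OF sg _ ni])
    also have "\<dots> \<le> (2 * c + 2) * K" using K by (simp add: algebra_simps)
    finally show "degree V (sel_edge V E K) u \<le> (2 * c + 2) * K" .
  qed
  then show ?thesis unfolding max_degree_def using fV by (simp add: Max_le_iff)
qed

lemma aux: "(l::nat) + (1 + b) * Z + q * Z \<le> (2 + b + q) * (l + Z)"
  by (simp add: algebra_simps)

theorem lemma2:
  fixes c a b :: nat
  shows "\<exists>C::real. \<forall>(V::nat set) E K col m.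
     simple_graph V E \<and> V \<noteq> {} \<and> nbhd_independence V E \<le> c \<and> K \<ge> 1 \<and>
     (\<forall>v\<in>V. degree V E v \<ge> K) \<and>
     two_hop_coloring V (sel_edge V E K) col m \<and>
     m \<le> a * (max_degree V (sel_edge V E K)) ^ 4
     \<longrightarrow> real (efficient_vm_rounds (card V) b m)
           \<le> C * (real (log_star (card V)) + real K ^ 4)"
proof (intro exI[of _ "real (2 + b + a * (2 * c + 2) ^ 4)"] allI impI)
  fix V :: "nat set" and E K col m
  assume h: "simple_graph V E \<and> V \<noteq> {} \<and> nbhd_independence V E \<le> c \<and> K \<ge> 1 \<and>
     (\<forall>v\<in>V. degree V E v \<ge> K) \<and>
     two_hop_coloring V (sel_edge V E K) col m \<and>
     m \<le> a * (max_degree V (sel_edge V E K)) ^ 4"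
  define D where "D = 2 * c + 2"
  define l where "l = log_star (card V)"
  have md: "max_degree V (sel_edge V E K) \<le> D * K" using maxdeg_bound h D_def by blast
  have "m \<le> a * (D * K) ^ 4" 
  proof -
    have "max_degree V (sel_edge V E K) ^ 4 \<le> (D * K) ^ 4" using md by (rule power_mono) simp
    then have "a * max_degree V (sel_edge V E K) ^ 4 \<le> a * (D * K) ^ 4" by (rule mult_le_mono2)
    then show ?thesis using h by linarith
  qed
  then have m: "m \<le> a * D ^ 4 * K ^ 4" by (simp add: power_mult_distrib mult.assoc)
  have K4: "1 \<le> K ^ 4" using h by simp
  have "efficient_vm_rounds (card V) b m = 1 + l + b + m" unfolding efficient_vm_rounds_def l_def by simp
  also have "\<dots> \<le> l + (1 + b) * K ^ 4 + a * D ^ 4 * K ^ 4"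
  proof -
    have X: "(1 + b) * 1 \<le> (1 + b) * K ^ 4" by (rule mult_le_mono2[OF K4])
    have "1 + l + b + m = l + (1 + b) * 1 + m" by simp
    also have "\<dots> \<le> l + (1 + b) * K ^ 4 + a * D ^ 4 * K ^ 4" by (intro add_mono X m le_refl)
    finally show ?thesis .
  qed
  also have "\<dots> \<le> (2 + b + a * D ^ 4) * (l + K ^ 4)"
    by (rule aux)
  finally have "efficient_vm_rounds (card V) b m \<le> (2 + b + a * D ^ 4) * (l + K ^ 4)" .
  then have "real (efficient_vm_rounds (card V) b m) \<le> real ((2 + b + a * D ^ 4) * (l + K ^ 4))"
    by (rule of_nat_mono)
  then show "real (efficient_vm_rounds (card V) b m)
           \<le> real (2 + b + a * (2 * c + 2) ^ 4) * (real (log_star (card V)) + real K ^ 4)"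
    unfolding D_def l_def by (simp only: of_nat_mult of_nat_add of_nat_power)
qed

end
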